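(* In the fixed-volume $\alpha$-cap process described in the context (with $|A_0|=\alpha$), there is $R>0$ such that $A_1\subseteq B(0,R)$.
   Context: $B(0,R)$ is the open Euclidean ball, $|\cdot|$ Lebesgue measure. Kernel assumptions: $g:\mathbb{R}^d\to[0,1]$, $g(x)=\tilde g(\|x\|)$; $g(0)=1$, $g>0$; $g$ is $L$-Lipschitz with continuous first and second derivatives; $\tilde g'(r)<0$ for $r>0$. Fixed-volume $\alpha$-cap process: $A_0\subset\mathbb{R}^d$ compact with $|A_0|=\alpha>0$; for $t\ge1$, $f_t(x)=\int\mathbbm{1}_{A_{t-1}}(y)g(x-y)\,dy$, $C_t=\inf\{C\ge0:|\{x:f_t(x)\ge C\}|<\alpha\}$, $A_t=\{x:f_t(x)\ge C_t\}$. *)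

theory Defs
  imports "HOL-Analysis.Analysis"
begin

definition kernel_conv :: "('a::euclidean_space \<Rightarrow> real) \<Rightarrow> 'a set \<Rightarrow> 'a \<Rightarrow> real" where
  "kernel_conv g A x = (LINT y|lebesgue. indicator A y * g (x - y))"

definition cap_threshold :: "('a::euclidean_space \<Rightarrow> real) \<Rightarrow> real \<Rightarrow> 'a set \<Rightarrow> real" where
  "cap_threshold g \<alpha> A =
     Inf {C. 0 \<le> C \<and> emeasure lebesgue {x. kernel_conv g A x \<ge> C} < ennreal \<alpha>}"

definition cap_step :: "('a::euclidean_space \<Rightarrow> real) \<Rightarrow> real \<Rightarrow> 'a set \<Rightarrow> 'a set" where
  "cap_step g \<alpha> A = {x. kernel_conv g A x \<ge> cap_threshold g \<alpha> A}"

primrec cap_process :: "('a::euclidean_space \<Rightarrow> real) \<Rightarrow> real \<Rightarrow> 'a set \<Rightarrow> nat \<Rightarrow> 'a set" where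
  "cap_process g \<alpha> A0 0 = A0"
| "cap_process g \<alpha> A0 (Suc t) = cap_step g \<alpha> (cap_process g \<alpha> A0 t)"

end

theory Submission
  imports Defs
begin

theorem lemma7:
  fixes g :: "'a::euclidean_space \<Rightarrow> real" and gt :: "real \<Rightarrow> real"
    and L \<alpha> :: real and A0 :: "'a set"
  assumes g_range: "\<And>x. 0 \<le> g x \<and> g x \<le> 1"
    and g_radial: "\<And>x. g x = gt (norm x)"
    and g_zero: "g 0 = 1"
    and g_pos: "\<And>x. g x > 0"
    and g_lip: "L-lipschitz_on UNIV g"
    and g_C2: "\<exists>Dg :: 'a \<Rightarrow> ('a \<Rightarrow>\<^sub>L real). \<exists>D2g :: 'a \<Rightarrow> ('a \<Rightarrow>\<^sub>L ('a \<Rightarrow>\<^sub>L real)).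
                 (\<forall>x. (g has_derivative blinfun_apply (Dg x)) (at x)) \<and> continuous_on UNIV Dg \<and>
                 (\<forall>x. (Dg has_derivative blinfun_apply (D2g x)) (at x)) \<and> continuous_on UNIV D2g"
    and gt_decr: "\<And>r. r > 0 \<Longrightarrow> \<exists>D. (gt has_real_derivative D) (at r) \<and> D < 0"
    and A0_compact: "compact A0"
    and A0_vol: "measure lebesgue A0 = \<alpha>"
    and \<alpha>_pos: "\<alpha> > 0"
  shows "\<exists>R>0. cap_process g \<alpha> A0 1 \<subseteq> ball 0 R"
proof -
  have gcont: "continuous_on UNIV g" using g_lip by (rule lipschitz_on_continuous_on)
  have Lnn: "0 \<le> L" using g_lip by (rule lipschitz_on_nonneg)
  have dec: "gt b < gt a" if "0 < a" "a < b" for a b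
    using DERIV_neg_imp_decreasing[of a b gt] that gt_decr by force
  have mono: "gt b \<le> gt a" if "0 < a" "a \<le> b" for a b
    using dec[of a b] that by (cases "a = b") auto
  obtain r0 where r0: "r0 > 0" "\<And>x. x \<in> A0 \<Longrightarrow> norm x \<le> r0"
    using compact_imp_bounded[OF A0_compact] by (auto simp: bounded_pos)
  have A0_lm: "A0 \<in> lmeasurable" using A0_compact by (rule lmeasurable_compact)
  hence A0_sets: "A0 \<in> sets lebesgue" and A0_fin: "emeasure lebesgue A0 < \<infinity>"
    by (auto simp: fmeasurable_def)
  have A0_em: "emeasure lebesgue A0 = ennreal \<alpha>"
    using A0_lm A0_vol by (simp add: emeasure_eq_measure2)
  define f where "f = kernel_conv g A0"
  have integ: "integrable lebesgue (\<lambda>y. indicator A0 y * g (x - y))" for x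
  proof -
    have c: "continuous_on A0 (\<lambda>y. g (x - y))"
      by (intro continuous_on_compose2[OF gcont]) (auto intro!: continuous_intros)
    have "integrable lborel (\<lambda>y. indicator A0 y *\<^sub>R g (x - y))"
      by (rule borel_integrable_compact[OF A0_compact c])
    moreover have "(\<lambda>y. indicator A0 y * g (x - y)) \<in> borel_measurable lborel"
      using A0_compact gcont
      by (intro borel_measurable_times borel_measurable_indicator)
         (auto intro!: borel_compact continuous_on_compose2[OF gcont] continuous_intros
            intro: borel_measurable_continuous_onI)
    ultimately show ?thesis by (simp add: integrable_completion)
  qed
  have integc: "integrable lebesgue (\<lambda>y. indicator A0 y * c)" for c :: real
    using A0_sets A0_fin by (intro integrable_mult_left) (simp add: integrable_indicator_iff)
  have intc: "(LINT y|lebesgue. indicator A0 y * c) = c * \<alpha>" for c :: real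
    using A0_vol by simp
  have upper: "f x \<le> c * \<alpha>" if "\<And>y. y \<in> A0 \<Longrightarrow> g (x - y) \<le> c" for x c
  proof -
    have "f x \<le> (LINT y|lebesgue. indicator A0 y * c)"
      unfolding f_def kernel_conv_def
      by (rule integral_mono[OF integ integc]) (auto simp: indicator_def that)
    thus ?thesis using A0_vol by (simp add: mult.commute)
  qed
  have lower: "c * \<alpha> \<le> f x" if "\<And>y. y \<in> A0 \<Longrightarrow> c \<le> g (x - y)" for x c
  proof -
    have "(LINT y|lebesgue. indicator A0 y * c) \<le> f x"
      unfolding f_def kernel_conv_def
      by (rule integral_mono[OF integc integ]) (auto simp: indicator_def that)
    thus ?thesis using A0_vol by (simp add: mult.commute)
  qed
  have lip1: "f x \<le> f x' + L * dist x x' * \<alpha>" for x x'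
  proof -
    have "f x \<le> (LINT y|lebesgue. indicator A0 y * g (x' - y) + indicator A0 y * (L * dist x x'))"
      unfolding f_def kernel_conv_def
    proof (rule integral_mono[OF integ Bochner_Integration.integrable_add[OF integ integc]])
      fix y
      have "g (x - y) - g (x' - y) \<le> dist (g (x - y)) (g (x' - y))" by (simp add: dist_real_def)
      also have "\<dots> \<le> L * dist (x - y) (x' - y)" by (rule lipschitz_onD[OF g_lip]) auto
      also have "dist (x - y) (x' - y) = dist x x'" by (simp add: dist_norm)
      finally show "indicator A0 y * g (x - y) \<le> indicator A0 y * g (x' - y) + indicator A0 y * (L * dist x x')"
        by (auto simp: indicator_def)
    qed
    also have "\<dots> = f x' + L * dist x x' * \<alpha>"
      unfolding f_def kernel_conv_def
      by (subst Bochner_Integration.integral_add[OF integ integc]) (simp add: A0_vol)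
    finally show ?thesis .
  qed
  have fcont: "continuous_on UNIV f"
  proof (rule lipschitz_on_continuous_on)
    show "(L * \<alpha>)-lipschitz_on UNIV f"
    proof (rule lipschitz_onI)
      fix x y :: 'a
      show "dist (f x) (f y) \<le> L * \<alpha> * dist x y"
        using lip1[of x y] lip1[of y x] by (simp add: dist_real_def dist_commute abs_le_iff algebra_simps)
    qed (use Lnn \<alpha>_pos in simp)
  qed
  have fsets: "{x. C \<le> f x} \<in> sets lebesgue" for C
  proof -
    have "closed {x. C \<le> f x}" by (rule closed_Collect_le[OF continuous_on_const fcont])
    hence "{x. C \<le> f x} \<in> sets borel" by (rule borel_closed)
    thus ?thesis by simp
  qed
  define C' where "C' = \<alpha> * gt (2 * r0)"
  obtain e :: 'a where e: "norm e = 1" using norm_Basis SOME_Basis by blast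
  have gt_le1: "gt r \<le> 1" if "0 \<le> r" for r
    using g_radial[of "r *\<^sub>R e"] g_range[of "r *\<^sub>R e"] e that by simp
  have C'le: "C' \<le> f x" if "norm x \<le> r0" for x
    unfolding C'_def
  proof (subst mult.commute, rule lower)
    fix y assume y: "y \<in> A0"
    have n: "norm (x - y) \<le> 2 * r0"
      using norm_triangle_ineq4[of x y] r0(2)[OF y] that by linarith
    show "gt (2 * r0) \<le> g (x - y)"
    proof (cases "x - y = 0")
      case True thus ?thesis using g_zero gt_le1[of "2*r0"] r0 by simp
    next
      case False thus ?thesis using mono[OF _ n] g_radial[of "x - y"] by simp
    qed
  qed
  have fsmall: "f x < C'" if "norm x \<ge> 3 * r0 + 1" for x
  proof -
    have "f x \<le> gt (2 * r0 + 1) * \<alpha>"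
    proof (rule upper)
      fix y assume y: "y \<in> A0"
      have n: "norm (x - y) \<ge> 2 * r0 + 1"
        using norm_triangle_ineq2[of x y] r0(2)[OF y] that by linarith
      show "g (x - y) \<le> gt (2 * r0 + 1)"
        using mono[OF _ n] g_radial[of "x - y"] r0 by simp
    qed
    also have "\<dots> < C'" unfolding C'_def using dec[of "2*r0" "2*r0+1"] r0 \<alpha>_pos by simp
    finally show ?thesis .
  qed
  have fle: "f x \<le> \<alpha>" for x
    using upper[of x 1] g_range by simp
  have meas: "ennreal \<alpha> \<le> emeasure lebesgue {x. C \<le> f x}" if "C \<le> C'" for C
  proof -
    have "A0 \<subseteq> {x. C \<le> f x}" using C'le r0(2) that by force
    thus ?thesis using emeasure_mono[OF _ fsets] A0_em by metis
  qed
  define S where "S = {C. 0 \<le> C \<and> emeasure lebesgue {x. kernel_conv g A0 x \<ge> C} < ennreal \<alpha>}"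
  have "\<alpha> + 1 \<in> S"
  proof -
    have "{x. kernel_conv g A0 x \<ge> \<alpha> + 1} = {}" using fle unfolding f_def by (smt (verit) Collect_empty_eq)
    thus ?thesis unfolding S_def using \<alpha>_pos by simp
  qed
  hence Sne: "S \<noteq> {}" by blast
  have thr: "C' \<le> cap_threshold g \<alpha> A0"
    unfolding cap_threshold_def S_def[symmetric]
  proof (rule cInf_greatest[OF Sne])
    fix C assume "C \<in> S"
    hence "emeasure lebesgue {x. C \<le> f x} < ennreal \<alpha>" unfolding S_def f_def by simp
    hence "\<not> C \<le> C'" using meas[of C] by (meson leD)
    thus "C' \<le> C" by simp
  qed
  show ?thesis
  proof (intro exI conjI)
    show "3 * r0 + 1 > 0" using r0 by simp
    show "cap_process g \<alpha> A0 1 \<subseteq> ball 0 (3 * r0 + 1)"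
    proof
      fix x assume "x \<in> cap_process g \<alpha> A0 1"
      hence "cap_threshold g \<alpha> A0 \<le> f x" by (simp add: cap_step_def f_def)
      thus "x \<in> ball 0 (3 * r0 + 1)" using thr fsmall[of x] by (force simp: not_le)
    qed
  qed
qed

end
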